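(* Let $C$ be an $(\epsilon,\delta)$-AWTP code of length $N$ over alphabet $\Sigma$ for a $(\rho_r,\rho_w)$-AWTP channel, with $\epsilon>0$ sufficiently small, and let the message $M$ be uniformly distributed on $\mathcal M$. Let $S_r^1\subseteq[N]$ with $|S_r^1|=\rho_rN$ be a read set of the adversary strategy described in the context, and let $C_{S_r^1}$ be the random variable given by the components of the codeword $\mathsf{Enc}(M)$ on $S_r^1$. Then \[ \mathsf H(M)-\mathsf H(M\mid C_{S_r^1})\le 2\epsilon\rho_rN\log\frac{|\Sigma|}{\epsilon}. \]
   Context: Definitions of $(\rho_r,\rho_w)$-AWTP channel and $(\epsilon,\delta)$-AWTP code: $\Sigma$ finite additive group, $[N]=\{1,\dots,N\}$; the adversary chooses a read set $S_r$ with $|S_r|\le\rho_rN$ and sees the codeword on $S_r$, and a write set $S_w$ with $|S_w|\le\rho_wN$ and adds an error vector supported in $S_w$; secrecy means the statistical distance between adversary views for any two messages is at most $\epsilon$, reliability means decoding error probability at most $\delta$. The adversary strategy considered: before transmission the adversary fixes two pairs $(S_r^i,S_w^i)$, $i=1,2$, with $|S_r^i|=\rho_rN$, $|S_w^i|=\rho_wN$, $|S_r^i\cup S_w^i|=\rho N$ for some $0\le\rho\le1$, and $S_r^1\cap S_w^2=\emptyset$; it chooses pair $i$ with probability $1/2$, reads the codeword on $S_r^i$, and adds a uniformly random error on the positions of $S_w^i$. $\log$ is base 2 and $\mathsf H$ denotes Shannon entropy. *)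

theory Defs
  imports "HOL-Probability.Probability"
begin

definition entropy_pmf :: "'a pmf \<Rightarrow> real" where
  "entropy_pmf p = - (\<Sum>x\<in>set_pmf p. pmf p x * log 2 (pmf p x))"

definition cond_entropy_pmf :: "('a \<times> 'b) pmf \<Rightarrow> real" where
  "cond_entropy_pmf p =
     (\<Sum>y\<in>set_pmf (map_pmf snd p).
        pmf (map_pmf snd p) y * entropy_pmf (map_pmf fst (cond_pmf p {z. snd z = y})))"

definition stat_dist :: "'a pmf \<Rightarrow> 'a pmf \<Rightarrow> real" where
  "stat_dist p q = (1/2) * (\<Sum>x\<in>set_pmf p \<union> set_pmf q. \<bar>pmf p x - pmf q x\<bar>)"

text \<open>Codewords are vectors indexed by [N] = {1..N}, represented as functions
  nat \<Rightarrow> 'a vanishing outside {1..N}.\<close>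
definition view :: "nat set \<Rightarrow> (nat \<Rightarrow> 'a) \<Rightarrow> (nat \<Rightarrow> 'a)" where
  "view S c = restrict c S"

definition awtp_secret ::
  "nat \<Rightarrow> real \<Rightarrow> real \<Rightarrow> 'm set \<Rightarrow> ('m \<Rightarrow> (nat \<Rightarrow> 'a) pmf) \<Rightarrow> bool" where
  "awtp_secret N \<rho>r \<epsilon> Ms Enc \<longleftrightarrow>
     (\<forall>Sr. Sr \<subseteq> {1..N} \<longrightarrow> real (card Sr) \<le> \<rho>r * real N \<longrightarrow>
       (\<forall>m\<in>Ms. \<forall>m'\<in>Ms.
          stat_dist (map_pmf (view Sr) (Enc m)) (map_pmf (view Sr) (Enc m')) \<le> \<epsilon>))"

definition awtp_reliable ::
  "nat \<Rightarrow> real \<Rightarrow> real \<Rightarrow> real \<Rightarrow> 'm set \<Rightarrow> ('m \<Rightarrow> (nat \<Rightarrow> 'a::ab_group_add) pmf)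
     \<Rightarrow> ((nat \<Rightarrow> 'a) \<Rightarrow> 'm) \<Rightarrow> bool" where
  "awtp_reliable N \<rho>r \<rho>w \<delta> Ms Enc Dec \<longleftrightarrow>
     (\<forall>Sr Sw (err :: (nat \<Rightarrow> 'a) \<Rightarrow> (nat \<Rightarrow> 'a) pmf).
        Sr \<subseteq> {1..N} \<longrightarrow> Sw \<subseteq> {1..N} \<longrightarrow>
        real (card Sr) \<le> \<rho>r * real N \<longrightarrow> real (card Sw) \<le> \<rho>w * real N \<longrightarrow>
        (\<forall>v. \<forall>e\<in>set_pmf (err v). \<forall>i. i \<notin> Sw \<longrightarrow> e i = 0) \<longrightarrow>
        (\<forall>m\<in>Ms. measure_pmf.prob
            (do { c \<leftarrow> Enc m; e \<leftarrow> err (view Sr c); return_pmf (\<lambda>i. c i + e i) })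
            {y. Dec y \<noteq> m} \<le> \<delta>))"

definition awtp_code ::
  "nat \<Rightarrow> real \<Rightarrow> real \<Rightarrow> real \<Rightarrow> real \<Rightarrow> 'm set \<Rightarrow> ('m \<Rightarrow> (nat \<Rightarrow> 'a::{ab_group_add,finite}) pmf)
     \<Rightarrow> ((nat \<Rightarrow> 'a) \<Rightarrow> 'm) \<Rightarrow> bool" where
  "awtp_code N \<rho>r \<rho>w \<epsilon> \<delta> Ms Enc Dec \<longleftrightarrow>
     finite Ms \<and> Ms \<noteq> {} \<and>
     (\<forall>m\<in>Ms. \<forall>c\<in>set_pmf (Enc m). \<forall>i. i \<notin> {1..N} \<longrightarrow> c i = 0) \<and>
     awtp_secret N \<rho>r \<epsilon> Ms Enc \<and>
     awtp_reliable N \<rho>r \<rho>w \<delta> Ms Enc Dec"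

definition msg_view_joint :: "'m set \<Rightarrow> ('m \<Rightarrow> (nat \<Rightarrow> 'a) pmf) \<Rightarrow> nat set \<Rightarrow> ('m \<times> (nat \<Rightarrow> 'a)) pmf" where
  "msg_view_joint Ms Enc S = do { m \<leftarrow> pmf_of_set Ms; c \<leftarrow> Enc m; return_pmf (m, view S c) }"

end

theory Submission
  imports Defs "HOL-Probability.Probability"
begin


lemma entropy_sum:
  assumes "finite A" "set_pmf p \<subseteq> A"
  shows "entropy_pmf p = - (\<Sum>x\<in>A. pmf p x * log 2 (pmf p x))"
  unfolding entropy_pmf_def
  by (rule arg_cong[where f=uminus], rule sum.mono_neutral_left)
     (use assms in \<open>auto simp: set_pmf_iff\<close>)

lemma pmf_map_Pair: "pmf (map_pmf (Pair a) p) (b, v) = (if a = b then pmf p v else 0)"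
proof -
  have "Pair a -` {(b, v)} = (if a = b then {v} else {})" by auto
  then show ?thesis by (simp add: pmf_map measure_pmf_single)
qed

lemma J_eq: "msg_view_joint Ms Enc S =
   bind_pmf (pmf_of_set Ms) (\<lambda>m. map_pmf (Pair m) (map_pmf (view S) (Enc m)))"
  unfolding msg_view_joint_def by (simp add: map_pmf_def bind_assoc_pmf bind_return_pmf)

lemma pmf_J:
  assumes "finite Ms" "Ms \<noteq> {}"
  shows "pmf (msg_view_joint Ms Enc S) (m, v) =
     (if m \<in> Ms then pmf (map_pmf (view S) (Enc m)) v / card Ms else 0)"
  unfolding J_eq using assms
  by (simp add: pmf_bind_pmf_of_set pmf_map_Pair if_distrib[of "\<lambda>x. x / _"] cong: if_cong)

lemma snd_J:
  "map_pmf snd (msg_view_joint Ms Enc S) = bind_pmf (pmf_of_set Ms) (\<lambda>m. map_pmf (view S) (Enc m))"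
  unfolding J_eq by (simp add: map_bind_pmf pmf.map_comp o_def)

lemma set_J:
  assumes "finite Ms" "Ms \<noteq> {}"
  shows "set_pmf (msg_view_joint Ms Enc S) \<subseteq> Ms \<times> UNIV"
  unfolding J_eq using assms by auto

lemma cond_fst:
  assumes "finite Ms" "Ms \<noteq> {}"
    and pos: "pmf (map_pmf snd (msg_view_joint Ms Enc S)) v > 0"
  shows "pmf (map_pmf fst (cond_pmf (msg_view_joint Ms Enc S) {z. snd z = v})) m =
     pmf (msg_view_joint Ms Enc S) (m, v) / pmf (map_pmf snd (msg_view_joint Ms Enc S)) v"
proof -
  let ?J = "msg_view_joint Ms Enc S"
  have ne: "set_pmf ?J \<inter> {z. snd z = v} \<noteq> {}"
  proof -
    have "v \<in> set_pmf (map_pmf snd ?J)" using pos by (metis less_irrefl set_pmf_iff)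
    then show ?thesis by auto
  qed
  have "pmf (map_pmf fst (cond_pmf ?J {z. snd z = v})) m
      = measure (cond_pmf ?J {z. snd z = v}) (fst -` {m})" by (simp add: pmf_map)
  also have "\<dots> = measure (cond_pmf ?J {z. snd z = v}) (fst -` {m} \<inter> set_pmf (cond_pmf ?J {z. snd z = v}))"
    by (simp add: measure_Int_set_pmf)
  also have "fst -` {m} \<inter> set_pmf (cond_pmf ?J {z. snd z = v}) = {(m,v)} \<inter> set_pmf (cond_pmf ?J {z. snd z = v})"
    using ne by auto
  also have "measure (cond_pmf ?J {z. snd z = v}) \<dots> = pmf (cond_pmf ?J {z. snd z = v}) (m, v)"
    by (simp add: measure_Int_set_pmf measure_pmf_single)
  also have "\<dots> = pmf ?J (m, v) / measure ?J {z. snd z = v}"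
    using ne by (simp add: pmf_cond)
  also have "measure ?J {z. snd z = v} = pmf (map_pmf snd ?J) v"
    by (simp add: pmf_map vimage_def)
  finally show ?thesis .
qed



lemma alg:
  fixes q :: "'m \<Rightarrow> 'v \<Rightarrow> real"
  assumes fM: "finite Ms" and ne: "Ms \<noteq> {}" and fV: "finite V"
    and q0: "\<And>m v. q m v \<ge> 0" and q1: "\<And>m. m \<in> Ms \<Longrightarrow> (\<Sum>v\<in>V. q m v) = 1"
    and p: "\<And>v. p v = (\<Sum>m\<in>Ms. q m v) / card Ms"
  shows "log 2 (card Ms) + (\<Sum>v\<in>V. \<Sum>m\<in>Ms. (q m v / card Ms) * log 2 ((q m v / card Ms) / p v))
       = (1 / card Ms) * (\<Sum>m\<in>Ms. \<Sum>v\<in>V. (q m v * log 2 (q m v) - p v * log 2 (p v)))"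
proof -
  define n where "n = real (card Ms)"
  have n0: "n > 0" using fM ne by (simp add: n_def card_gt_0_iff)
  have trm: "(q m v / n) * log 2 ((q m v / n) / p v)
      = (q m v / n) * log 2 (q m v) - (q m v / n) * log 2 n - (q m v / n) * log 2 (p v)"
    if "m \<in> Ms" for m v
  proof (cases "q m v = 0")
    case True then show ?thesis by simp
  next
    case False
    then have qp: "q m v > 0" using q0[of m v] by simp
    have "q m v \<le> (\<Sum>m\<in>Ms. q m v)" using that fM by (intro member_le_sum) (auto intro: q0)
    then have "p v > 0" using qp n0 p[of v] by (simp add: n_def)
    then have "log 2 ((q m v / n) / p v) = log 2 (q m v) - log 2 n - log 2 (p v)"
      using qp n0 by (simp add: log_divide log_mult)
    then show ?thesis unfolding \<open>log 2 ((q m v / n) / p v) = _\<close> by (simp add: right_diff_distrib)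
  qed
  have s1: "(\<Sum>v\<in>V. \<Sum>m\<in>Ms. q m v) = n"
    by (subst sum.swap) (simp add: q1 n_def)
  have "(\<Sum>v\<in>V. \<Sum>m\<in>Ms. (q m v / n) * log 2 ((q m v / n) / p v))
      = (\<Sum>v\<in>V. \<Sum>m\<in>Ms. (q m v / n) * log 2 (q m v) - (q m v / n) * log 2 n - (q m v / n) * log 2 (p v))"
    by (intro sum.cong refl trm)
  also have "\<dots> = (1/n) * (\<Sum>v\<in>V. \<Sum>m\<in>Ms. q m v * log 2 (q m v)) - (log 2 n / n) * (\<Sum>v\<in>V. \<Sum>m\<in>Ms. q m v)
      - (\<Sum>v\<in>V. p v * log 2 (p v))"
    apply (simp only: sum_subtractf)
    apply (simp add: sum_distrib_left sum_divide_distrib[symmetric] sum_distrib_right[symmetric] p flip: n_def)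
    by (simp add: sum_distrib_left mult.commute)
  also have "\<dots> = (1/n) * (\<Sum>v\<in>V. \<Sum>m\<in>Ms. q m v * log 2 (q m v)) - log 2 n - (\<Sum>v\<in>V. p v * log 2 (p v))"
    using s1 n0 by simp
  finally have L: "(\<Sum>v\<in>V. \<Sum>m\<in>Ms. (q m v / n) * log 2 ((q m v / n) / p v)) = \<dots>" .
  have R: "(1 / n) * (\<Sum>m\<in>Ms. \<Sum>v\<in>V. (q m v * log 2 (q m v) - p v * log 2 (p v)))
     = (1/n) * (\<Sum>v\<in>V. \<Sum>m\<in>Ms. q m v * log 2 (q m v)) - (\<Sum>v\<in>V. p v * log 2 (p v))"
    using n0 by (simp add: sum_subtractf sum.swap[of _ V] n_def right_diff_distrib)
  show ?thesis using L R by (simp add: n_def)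
qed



lemma subadd_f:
  fixes a b :: real assumes "0 \<le> a" "0 \<le> b"
  shows "b * log 2 b - (a+b) * log 2 (a+b) \<le> - a * log 2 a"
proof (cases "a = 0 \<or> b = 0")
  case True then show ?thesis using assms by auto
next
  case False
  then have a: "a > 0" and b: "b > 0" using assms by auto
  have "a * log 2 a \<le> a * log 2 (a+b)" using a b by (intro mult_left_mono) auto
  moreover have "b * log 2 b \<le> b * log 2 (a+b)" using a b by (intro mult_left_mono) auto
  ultimately show ?thesis by (simp add: algebra_simps)
qed

lemma hard_f:
  fixes p q :: real assumes "0 \<le> p" "p \<le> q" "q \<le> 1"
  shows "q * log 2 q - p * log 2 p \<le> (q - p) / ln 2"
proof (cases "p = 0")
  case True
  have "q * log 2 q \<le> 0"
  proof (cases "q = 0")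
    case False then have "q > 0" using assms by auto
    then have "log 2 q \<le> 0" using assms by simp
    then show ?thesis using \<open>q > 0\<close> by (simp add: mult_nonneg_nonpos)
  qed simp
  moreover have "0 \<le> q / ln 2" using assms True by simp
  ultimately show ?thesis using True by simp
next
  case False
  then have p: "p > 0" using assms by auto
  then have q: "q > 0" using assms by auto
  have "ln (q/p) \<le> q/p - 1" using p q by (intro ln_le_minus_one) auto
  then have "p * ln (q/p) \<le> p * (q/p - 1)" using p by (intro mult_left_mono) auto
  also have "\<dots> = q - p" using p by (simp add: field_simps)
  finally have "p * ln (q/p) \<le> q - p" .
  then have "p * ln (q/p) / ln 2 \<le> (q - p) / ln 2" by (simp add: divide_right_mono)
  moreover have "p * ln (q/p) / ln 2 = p * (log 2 q - log 2 p)"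
    using p q by (simp add: log_def ln_div field_simps)
  ultimately have A: "p * (log 2 q - log 2 p) \<le> (q - p) / ln 2" by simp
  have B: "(q - p) * log 2 q \<le> 0" using assms q by (intro mult_nonneg_nonpos) auto
  have "q * log 2 q - p * log 2 p = p * (log 2 q - log 2 p) + (q - p) * log 2 q"
    by (simp add: algebra_simps)
  then show ?thesis using A B by linarith
qed

lemma easy_f:
  fixes d e K :: real assumes "d > 0" "e > 0" "K > 0"
  shows "- d * log 2 d \<le> d * log 2 (K / e) + (e / K - d) / ln 2"
proof -
  have "ln (e/(K*d)) \<le> e/(K*d) - 1" using assms by (intro ln_le_minus_one) auto
  then have "d * ln (e/(K*d)) \<le> d * (e/(K*d) - 1)" using assms by (intro mult_left_mono) auto
  also have "\<dots> = e/K - d" using assms by (simp add: field_simps)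
  finally have "d * ln (e/(K*d)) / ln 2 \<le> (e/K - d) / ln 2" by (simp add: divide_right_mono)
  moreover have "d * ln (e/(K*d)) / ln 2 = - d * log 2 d - d * log 2 (K / e)"
    using assms by (simp add: log_def ln_div ln_mult field_simps)
  ultimately show ?thesis by linarith
qed



lemma bound_one:
  fixes p q :: "'v \<Rightarrow> real"
  assumes fV: "finite V" and p0: "\<And>v. v \<in> V \<Longrightarrow> 0 \<le> p v"
    and q0: "\<And>v. v \<in> V \<Longrightarrow> 0 \<le> q v" and q1: "\<And>v. v \<in> V \<Longrightarrow> q v \<le> 1"
    and eqs: "sum p V = sum q V" and L1: "(\<Sum>v\<in>V. \<bar>p v - q v\<bar>) \<le> 2 * e"
    and e0: "e > 0" and eK: "e \<le> real (card V)"
  shows "(\<Sum>v\<in>V. q v * log 2 (q v) - p v * log 2 (p v)) \<le> e * log 2 (real (card V) / e) + e / ln 2"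
proof -
  define K where "K = real (card V)"
  have K0: "K > 0" using e0 eK K_def by linarith
  define A where "A = {v\<in>V. q v < p v}"
  define B where "B = {v\<in>V. \<not> q v < p v}"
  have AB: "V = A \<union> B" "A \<inter> B = {}" "finite A" "finite B" using fV by (auto simp: A_def B_def)
  have split: "sum g V = sum g A + sum g B" for g :: "'v \<Rightarrow> real"
    using AB by (metis sum.union_disjoint)
  define \<alpha> where "\<alpha> = (\<Sum>v\<in>A. p v - q v)"
  have "(\<Sum>v\<in>V. p v - q v) = 0" using eqs by (simp add: sum_subtractf)
  then have Bs: "(\<Sum>v\<in>B. q v - p v) = \<alpha>"
    unfolding \<alpha>_def split by (simp add: sum_subtractf)
  have "(\<Sum>v\<in>V. \<bar>p v - q v\<bar>) = (\<Sum>v\<in>A. p v - q v) + (\<Sum>v\<in>B. q v - p v)"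
    unfolding split by (intro arg_cong2[where f="(+)"] sum.cong) (auto simp: A_def B_def)
  then have a_le: "\<alpha> \<le> e" using L1 Bs \<alpha>_def by linarith
  have a0: "\<alpha> \<ge> 0" unfolding \<alpha>_def by (intro sum_nonneg) (auto simp: A_def)
  have cA: "real (card A) \<le> K" unfolding K_def using AB by (simp add: card_mono)
  have SA: "(\<Sum>v\<in>A. q v * log 2 (q v) - p v * log 2 (p v))
      \<le> (\<Sum>v\<in>A. (p v - q v) * log 2 (K / e) + (e / K - (p v - q v)) / ln 2)"
  proof (intro sum_mono)
    fix v assume v: "v \<in> A"
    then have vV: "v \<in> V" and lt: "q v < p v" by (auto simp: A_def)
    have "q v * log 2 (q v) - (p v - q v + q v) * log 2 (p v - q v + q v) \<le> - (p v - q v) * log 2 (p v - q v)"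
      using lt q0[OF vV] by (intro subadd_f) auto
    also have "\<dots> \<le> (p v - q v) * log 2 (K / e) + (e / K - (p v - q v)) / ln 2"
      using lt e0 K0 by (intro easy_f) auto
    finally show "q v * log 2 (q v) - p v * log 2 (p v) \<le> \<dots>" by simp
  qed
  also have "\<dots> = \<alpha> * log 2 (K / e) + (real (card A) * (e / K) - \<alpha>) / ln 2"
    by (simp add: \<alpha>_def sum.distrib sum_distrib_right[symmetric] sum_divide_distrib[symmetric] sum_subtractf)
  also have "\<dots> \<le> \<alpha> * log 2 (K / e) + (e - \<alpha>) / ln 2"
  proof -
    have "real (card A) * (e / K) \<le> K * (e / K)" using cA e0 K0 by (intro mult_right_mono) auto
    then have "real (card A) * (e / K) \<le> e" using K0 by simp
    then show ?thesis by (simp add: divide_right_mono)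
  qed
  finally have SA': "(\<Sum>v\<in>A. q v * log 2 (q v) - p v * log 2 (p v)) \<le> \<alpha> * log 2 (K / e) + (e - \<alpha>) / ln 2" .
  have SB: "(\<Sum>v\<in>B. q v * log 2 (q v) - p v * log 2 (p v)) \<le> (\<Sum>v\<in>B. (q v - p v) / ln 2)"
  proof (intro sum_mono)
    fix v assume v: "v \<in> B"
    then have vV: "v \<in> V" and le: "p v \<le> q v" by (auto simp: B_def)
    show "q v * log 2 (q v) - p v * log 2 (p v) \<le> (q v - p v) / ln 2"
      using hard_f[OF p0[OF vV] le q1[OF vV]] .
  qed
  also have "\<dots> = \<alpha> / ln 2" using Bs by (simp add: sum_divide_distrib[symmetric])
  finally have SB': "(\<Sum>v\<in>B. q v * log 2 (q v) - p v * log 2 (p v)) \<le> \<alpha> / ln 2" .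
  have lg: "log 2 (K / e) \<ge> 0" using eK e0 K0 K_def by simp
  have "\<alpha> * log 2 (K / e) \<le> e * log 2 (K / e)" using a_le lg by (intro mult_right_mono)
  moreover have "(e - \<alpha>) / ln 2 + \<alpha> / ln 2 = e / ln 2" by (simp add: field_simps)
  ultimately show ?thesis using SA' SB' unfolding split K_def by linarith
qed



lemma bound_avg:
  fixes q :: "'m \<Rightarrow> 'v \<Rightarrow> real"
  assumes fM: "finite Ms" and ne: "Ms \<noteq> {}" and fV: "finite V"
    and q0: "\<And>m v. q m v \<ge> 0" and q1: "\<And>m v. q m v \<le> 1"
    and qs: "\<And>m. m \<in> Ms \<Longrightarrow> (\<Sum>v\<in>V. q m v) = 1"
    and p: "\<And>v. p v = (\<Sum>m\<in>Ms. q m v) / card Ms"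
    and sec: "\<And>m m'. m \<in> Ms \<Longrightarrow> m' \<in> Ms \<Longrightarrow> (\<Sum>v\<in>V. \<bar>q m' v - q m v\<bar>) \<le> 2 * e"
    and e0: "e > 0" and eK: "e \<le> real (card V)"
  shows "(1 / card Ms) * (\<Sum>m\<in>Ms. \<Sum>v\<in>V. (q m v * log 2 (q m v) - p v * log 2 (p v)))
     \<le> e * log 2 (real (card V) / e) + e / ln 2"
proof -
  define n where "n = real (card Ms)"
  have n0: "n > 0" using fM ne by (simp add: n_def card_gt_0_iff)
  have one: "(\<Sum>v\<in>V. q m v * log 2 (q m v) - p v * log 2 (p v)) \<le> e * log 2 (real (card V) / e) + e / ln 2"
    if m: "m \<in> Ms" for m
  proof (rule bound_one[OF fV])
    show "0 \<le> p v" for v unfolding p by (intro divide_nonneg_nonneg sum_nonneg q0) auto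
    show "sum p V = sum (q m) V"
    proof -
      have "sum p V = (\<Sum>m\<in>Ms. \<Sum>v\<in>V. q m v) / n"
        by (simp add: p sum_divide_distrib[symmetric] sum.swap[of _ V] n_def)
      also have "\<dots> = 1" using qs n0 by (simp add: n_def)
      finally show ?thesis using qs[OF m] by simp
    qed
    have pt: "\<bar>p v - q m v\<bar> \<le> (\<Sum>m'\<in>Ms. \<bar>q m' v - q m v\<bar>) / n" for v
    proof -
      have "p v - q m v = (\<Sum>m'\<in>Ms. q m' v - q m v) / n"
        using n0 by (simp add: p sum_subtractf n_def field_simps)
      then have "\<bar>p v - q m v\<bar> = \<bar>\<Sum>m'\<in>Ms. q m' v - q m v\<bar> / n" using n0 by simp
      also have "\<dots> \<le> (\<Sum>m'\<in>Ms. \<bar>q m' v - q m v\<bar>) / n"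
        using n0 by (intro divide_right_mono sum_abs) auto
      finally show ?thesis .
    qed
    have "(\<Sum>v\<in>V. \<bar>p v - q m v\<bar>) \<le> (\<Sum>v\<in>V. (\<Sum>m'\<in>Ms. \<bar>q m' v - q m v\<bar>) / n)"
      by (intro sum_mono pt)
    also have "\<dots> = (\<Sum>m'\<in>Ms. \<Sum>v\<in>V. \<bar>q m' v - q m v\<bar>) / n"
      by (simp add: sum_divide_distrib[symmetric] sum.swap[of _ V])
    also have "\<dots> \<le> (\<Sum>m'\<in>Ms. 2 * e) / n"
      using n0 by (intro divide_right_mono sum_mono sec m) auto
    also have "\<dots> = 2 * e" using n0 by (simp add: n_def)
    finally show "(\<Sum>v\<in>V. \<bar>p v - q m v\<bar>) \<le> 2 * e" .
  qed (use q0 q1 e0 eK in auto)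
  have "(\<Sum>m\<in>Ms. \<Sum>v\<in>V. (q m v * log 2 (q m v) - p v * log 2 (p v)))
      \<le> (\<Sum>m\<in>Ms. e * log 2 (real (card V) / e) + e / ln 2)"
    by (intro sum_mono one)
  also have "\<dots> = n * (e * log 2 (real (card V) / e) + e / ln 2)" by (simp add: n_def)
  finally show ?thesis using n0 by (simp add: n_def[symmetric] field_simps)
qed

lemma singleton_zero:
  fixes q :: "'m \<Rightarrow> 'v \<Rightarrow> real"
  assumes fM: "finite Ms" and ne: "Ms \<noteq> {}" and cV: "card V = 1"
    and qs: "\<And>m. m \<in> Ms \<Longrightarrow> (\<Sum>v\<in>V. q m v) = 1"
    and p: "\<And>v. p v = (\<Sum>m\<in>Ms. q m v) / card Ms"
  shows "(1 / card Ms) * (\<Sum>m\<in>Ms. \<Sum>v\<in>V. (q m v * log 2 (q m v) - p v * log 2 (p v))) = 0"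
proof -
  obtain v0 where V: "V = {v0}" using cV card_1_singletonE by blast
  have q: "q m v0 = 1" if "m \<in> Ms" for m using qs[OF that] V by simp
  have "p v0 = 1" using q fM ne by (simp add: p card_gt_0_iff)
  then show ?thesis using q V by simp
qed

lemma final_arith:
  fixes e c s :: real
  assumes e0: "0 < e" and e3: "e < 1/3" and c1: "c \<ge> 1" and s1: "s \<ge> 1"
  shows "e * log 2 (c powr s / e) + e / ln 2 \<le> 2 * e * s * log 2 (c / e)"
proof -
  have "e * exp 1 \<le> e * 3" using exp_le e0 by (intro mult_left_mono) auto
  then have "e * exp 1 \<le> 1" using e3 by linarith
  then have "exp 1 \<le> 1 / e" using e0 by (simp add: field_simps)
  then have "1 \<le> ln (1/e)" using e0 by (simp add: ln_ge_iff)
  then have "1 \<le> - ln e" using e0 by (simp add: ln_div)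
  then have "1 / ln 2 \<le> (- ln e) / ln 2" by (rule divide_right_mono) simp
  then have L: "1 / ln 2 \<le> - log 2 e" by (simp add: log_def)
  have lc: "log 2 c \<ge> 0" using c1 by simp
  have le: "- log 2 e \<ge> 0" using e0 e3 by simp
  have A: "log 2 (c powr s / e) = s * log 2 c - log 2 e" using c1 e0 by (simp add: log_divide log_powr)
  have B: "log 2 (c / e) = log 2 c - log 2 e" using c1 e0 by (simp add: log_divide)
  have "s * log 2 c - log 2 e + 1 / ln 2 \<le> 2 * s * (log 2 c - log 2 e)"
  proof -
    have "s * log 2 c \<le> 2 * s * log 2 c" using s1 lc by simp
    moreover have "- log 2 e + (- log 2 e) \<le> 2 * s * (- log 2 e)"
      using s1 le mult_right_mono[of 1 s "- log 2 e"] by simp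
    ultimately show ?thesis using L by (simp add: algebra_simps)
  qed
  then have "e * (s * log 2 c - log 2 e + 1 / ln 2) \<le> e * (2 * s * (log 2 c - log 2 e))"
    using e0 by (intro mult_left_mono) auto
  then show ?thesis unfolding A B by (simp add: algebra_simps)
qed



theorem mainTheorem2:
  "\<exists>\<epsilon>0 > 0. \<forall>(N::nat) \<rho>r \<rho>w \<epsilon> \<delta> (Ms :: 'm set)
       (Enc :: 'm \<Rightarrow> (nat \<Rightarrow> 'a::{ab_group_add,finite}) pmf) Dec (S :: nat set).
     0 < \<epsilon> \<longrightarrow> \<epsilon> < \<epsilon>0 \<longrightarrow>
     awtp_code N \<rho>r \<rho>w \<epsilon> \<delta> Ms Enc Dec \<longrightarrow>
     S \<subseteq> {1..N} \<longrightarrow> real (card S) = \<rho>r * real N \<longrightarrow>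
     entropy_pmf (pmf_of_set Ms) - cond_entropy_pmf (msg_view_joint Ms Enc S)
       \<le> 2 * \<epsilon> * \<rho>r * real N * log 2 (real CARD('a) / \<epsilon>)"
proof (rule exI[of _ "1/3"], intro conjI allI impI)
  show "(1/3::real) > 0" by simp
  fix N :: nat and \<rho>r \<rho>w \<epsilon> \<delta> :: real and Ms :: "'m set"
    and Enc :: "'m \<Rightarrow> (nat \<Rightarrow> 'a::{ab_group_add,finite}) pmf" and Dec and S :: "nat set"
  assume e0: "0 < \<epsilon>" and e3: "\<epsilon> < 1/3" and code: "awtp_code N \<rho>r \<rho>w \<epsilon> \<delta> Ms Enc Dec"
    and SN: "S \<subseteq> {1..N}" and cS: "real (card S) = \<rho>r * real N"
  from code have fM: "finite Ms" and ne: "Ms \<noteq> {}" and secr: "awtp_secret N \<rho>r \<epsilon> Ms Enc"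
    unfolding awtp_code_def by auto
  define Q where "Q m = map_pmf (view S) (Enc m)" for m
  define V where "V = (\<Pi>\<^sub>E i\<in>S. (UNIV :: 'a set))"
  define J where "J = msg_view_joint Ms Enc S"
  define n where "n = real (card Ms)"
  define q where "q m v = pmf (Q m) v" for m v
  define p where "p v = pmf (map_pmf snd J) v" for v
  have n0: "n > 0" using fM ne by (simp add: n_def card_gt_0_iff)
  have fS: "finite S" using SN finite_subset by blast
  have fV: "finite V" unfolding V_def using fS by (intro finite_PiE) auto
  have cV: "card V = CARD('a) ^ card S" unfolding V_def using fS by (simp add: card_PiE)
  have setQ: "set_pmf (Q m) \<subseteq> V" for m
    by (auto simp: Q_def V_def view_def)
  have p_eq: "p v = (\<Sum>m\<in>Ms. q m v) / card Ms" for v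
    unfolding p_def J_def snd_J using fM ne by (simp add: pmf_bind_pmf_of_set q_def Q_def)
  have q0: "q m v \<ge> 0" for m v by (simp add: q_def)
  have q1: "q m v \<le> 1" for m v by (simp add: q_def pmf_le_1)
  have qs: "(\<Sum>v\<in>V. q m v) = 1" for m
    unfolding q_def by (rule sum_pmf_eq_1[OF fV setQ])
  have p0: "p v \<ge> 0" for v by (simp add: p_def)
  have Jq: "pmf J (m, v) = q m v / n" if "m \<in> Ms" for m v
    using pmf_J[OF fM ne, of Enc S m v] that by (simp add: J_def q_def Q_def n_def)
  have HM: "entropy_pmf (pmf_of_set Ms) = log 2 n"
  proof -
    have "entropy_pmf (pmf_of_set Ms) = - (\<Sum>x\<in>Ms. (1/n) * log 2 (1/n))"
      unfolding entropy_pmf_def using fM ne by (simp add: n_def)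
    also have "\<dots> = log 2 n" using n0 fM ne by (simp add: n_def log_divide)
    finally show ?thesis .
  qed
  have per_v: "p v * entropy_pmf (map_pmf fst (cond_pmf J {z. snd z = v}))
      = - (\<Sum>m\<in>Ms. (q m v / n) * log 2 ((q m v / n) / p v))" for v
  proof (cases "p v = 0")
    case True
    then have "(\<Sum>m\<in>Ms. q m v) = 0" using p_eq[of v] n0 by (simp add: n_def)
    then have "\<forall>m\<in>Ms. q m v = 0" using fM q0 by (simp add: sum_nonneg_eq_0_iff)
    then show ?thesis using True by simp
  next
    case False
    then have pv: "p v > 0" using p0[of v] by simp
    let ?X = "map_pmf fst (cond_pmf J {z. snd z = v})"
    have X: "pmf ?X m = pmf J (m, v) / p v" for m
      using cond_fst[OF fM ne, of Enc S v m] pv by (simp add: J_def p_def)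
    have sX: "set_pmf ?X \<subseteq> Ms"
    proof
      fix m assume "m \<in> set_pmf ?X"
      then have "pmf ?X m \<noteq> 0" by (metis set_pmf_iff)
      then show "m \<in> Ms" using X[of m] pmf_J[OF fM ne, of Enc S m v] by (auto simp: J_def split: if_splits)
    qed
    have "entropy_pmf ?X = - (\<Sum>m\<in>Ms. pmf ?X m * log 2 (pmf ?X m))"
      by (rule entropy_sum[OF fM sX])
    also have "\<dots> = - (\<Sum>m\<in>Ms. ((q m v / n) / p v) * log 2 ((q m v / n) / p v))"
      by (intro arg_cong[where f=uminus] sum.cong refl) (simp add: X Jq)
    finally have "p v * entropy_pmf ?X = - (\<Sum>m\<in>Ms. p v * (((q m v / n) / p v) * log 2 ((q m v / n) / p v)))"
      by (simp add: sum_distrib_left)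
    also have "\<dots> = - (\<Sum>m\<in>Ms. (q m v / n) * log 2 ((q m v / n) / p v))"
      using pv by (intro arg_cong[where f=uminus] sum.cong refl) simp
    finally show ?thesis .
  qed
  have sP: "set_pmf (map_pmf snd J) \<subseteq> V"
    unfolding J_def snd_J using fM ne setQ by (auto simp: Q_def)
  have HC: "cond_entropy_pmf J = - (\<Sum>v\<in>V. \<Sum>m\<in>Ms. (q m v / n) * log 2 ((q m v / n) / p v))"
  proof -
    have "cond_entropy_pmf J = (\<Sum>v\<in>V. p v * entropy_pmf (map_pmf fst (cond_pmf J {z. snd z = v})))"
      unfolding cond_entropy_pmf_def p_def
    proof (rule sum.mono_neutral_left[OF fV sP], intro ballI)
      fix v assume "v \<in> V - set_pmf (map_pmf snd J)"
      then have "pmf (map_pmf snd J) v = 0" by (meson DiffD2 pmf_eq_0_set_pmf)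
      then show "pmf (map_pmf snd J) v * entropy_pmf (map_pmf fst (cond_pmf J {z. snd z = v})) = 0" by simp
    qed
    also have "\<dots> = (\<Sum>v\<in>V. - (\<Sum>m\<in>Ms. (q m v / n) * log 2 ((q m v / n) / p v)))"
      by (intro sum.cong refl per_v)
    finally show ?thesis by (simp add: sum_negf)
  qed
  have ID: "entropy_pmf (pmf_of_set Ms) - cond_entropy_pmf J
     = (1 / card Ms) * (\<Sum>m\<in>Ms. \<Sum>v\<in>V. (q m v * log 2 (q m v) - p v * log 2 (p v)))"
    unfolding HM HC using alg[OF fM ne fV q0 qs p_eq] by (simp add: n_def)
  have RHS: "2 * \<epsilon> * \<rho>r * real N * log 2 (real CARD('a) / \<epsilon>)
      = 2 * \<epsilon> * real (card S) * log 2 (real CARD('a) / \<epsilon>)"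
    using cS by simp
  show "entropy_pmf (pmf_of_set Ms) - cond_entropy_pmf (msg_view_joint Ms Enc S)
       \<le> 2 * \<epsilon> * \<rho>r * real N * log 2 (real CARD('a) / \<epsilon>)"
    unfolding J_def[symmetric] ID RHS
  proof (cases "card S = 0")
    case True
    then have "card V = 1" using cV by simp
    then show "(1 / card Ms) * (\<Sum>m\<in>Ms. \<Sum>v\<in>V. (q m v * log 2 (q m v) - p v * log 2 (p v)))
      \<le> 2 * \<epsilon> * real (card S) * log 2 (real CARD('a) / \<epsilon>)"
    proof -
      have z: "(1 / card Ms) * (\<Sum>m\<in>Ms. \<Sum>v\<in>V. (q m v * log 2 (q m v) - p v * log 2 (p v))) = 0"
        by (rule singleton_zero[OF fM ne \<open>card V = 1\<close> qs p_eq])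
      have "2 * \<epsilon> * real (card S) * log 2 (real CARD('a) / \<epsilon>) = 0" using True by simp
      then show ?thesis using z by linarith
    qed
  next
    case False
    have c1: "real CARD('a) \<ge> 1" by (simp add: Suc_leI)
    have cVr: "real (card V) = real CARD('a) powr real (card S)"
      using c1 cV by (simp add: powr_realpow)
    have eK: "\<epsilon> \<le> real (card V)"
    proof -
      have "(1::real) \<le> real CARD('a) ^ card S" using c1 by (simp add: one_le_power)
      moreover have "real (card V) = real CARD('a) ^ card S" using cV by simp
      ultimately show ?thesis using e3 by linarith
    qed
    have sec: "(\<Sum>v\<in>V. \<bar>q m' v - q m v\<bar>) \<le> 2 * \<epsilon>" if "m \<in> Ms" "m' \<in> Ms" for m m'
    proof -
      have "stat_dist (Q m') (Q m) \<le> \<epsilon>"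
        using secr that SN cS unfolding awtp_secret_def Q_def by auto
      moreover have "stat_dist (Q m') (Q m) = (1/2) * (\<Sum>v\<in>V. \<bar>q m' v - q m v\<bar>)"
        unfolding stat_dist_def q_def
        by (intro arg_cong[where f="(*) (1/2)"] sum.mono_neutral_left fV) (use setQ in \<open>auto simp: set_pmf_iff\<close>)
      ultimately show ?thesis by simp
    qed
    have "(1 / card Ms) * (\<Sum>m\<in>Ms. \<Sum>v\<in>V. (q m v * log 2 (q m v) - p v * log 2 (p v)))
        \<le> \<epsilon> * log 2 (real (card V) / \<epsilon>) + \<epsilon> / ln 2"
      by (rule bound_avg[OF fM ne fV q0 q1 qs p_eq sec e0 eK])
    also have "\<dots> \<le> 2 * \<epsilon> * real (card S) * log 2 (real CARD('a) / \<epsilon>)"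
      unfolding cVr using final_arith[OF e0 e3 c1, of "real (card S)"] False by simp
    finally show "(1 / card Ms) * (\<Sum>m\<in>Ms. \<Sum>v\<in>V. (q m v * log 2 (q m v) - p v * log 2 (p v)))
      \<le> 2 * \<epsilon> * real (card S) * log 2 (real CARD('a) / \<epsilon>)" .
  qed
qed


end
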